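(* For each $j=0,\dots,4$, every isometry of the $\mathbb{Z}$-lattice $\Lambda_j$ is induced by an ($\mathcal{E}$-linear) isometry of $\Lambda$.
   Context: Let $\omega=e^{2\pi i/3}$, $\mathcal{E}=\mathbb{Z}[\omega]$, $\theta=\sqrt{-3}$. Let $\Lambda=\mathcal{E}^5$ with Hermitian form $h(x,y)=-x_0\bar y_0+x_1\bar y_1+\dots+x_4\bar y_4$. For $j=0,\dots,4$ let $\xi_j$ be the antilinear map $(x_0,\dots,x_4)\mapsto(\bar x_0,\dots,\bar x_{4-j},-\bar x_{5-j},\dots,-\bar x_4)$, and let $\Lambda_j=\Lambda^{\xi_j}$ be the $\mathbb{Z}$-lattice of $\xi_j$-fixed vectors, i.e. $\Lambda_j=\mathbb{Z}^{5-j}\oplus\theta\mathbb{Z}^j\subset\mathcal{E}^5$, equipped with the restriction of $h$ (which is real- and integer-valued on it). *)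

theory Defs
  imports Complex_Main
begin

text \<open>Vectors of C^5 are modelled as functions nat => complex supported on {0..<5}.\<close>

definition omega :: complex where
  "omega = Complex (-1/2) (sqrt 3 / 2)"

definition Eis :: "complex set" where
  "Eis = {of_int a + of_int b * omega | a b. True}"

definition Lam :: "(nat \<Rightarrow> complex) set" where
  "Lam = {x. (\<forall>i<5. x i \<in> Eis) \<and> (\<forall>i\<ge>5. x i = 0)}"

definition herm :: "(nat \<Rightarrow> complex) \<Rightarrow> (nat \<Rightarrow> complex) \<Rightarrow> complex" where
  "herm x y = - x 0 * cnj (y 0) + (\<Sum>i\<in>{1..4}. x i * cnj (y i))"

definition xi :: "nat \<Rightarrow> (nat \<Rightarrow> complex) \<Rightarrow> (nat \<Rightarrow> complex)" where
  "xi j x = (\<lambda>i. if i < 5 - j then cnj (x i) else if i < 5 then - cnj (x i) else 0)"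

definition Lam_j :: "nat \<Rightarrow> (nat \<Rightarrow> complex) set" where
  "Lam_j j = {x \<in> Lam. xi j x = x}"

text \<open>Isometry of the Z-lattice Lambda_j (with the restriction of h): an additive (hence
  Z-linear) bijection of Lambda_j onto itself preserving h.\<close>
definition lattice_isometry_j :: "nat \<Rightarrow> ((nat \<Rightarrow> complex) \<Rightarrow> (nat \<Rightarrow> complex)) \<Rightarrow> bool" where
  "lattice_isometry_j j g \<longleftrightarrow>
     bij_betw g (Lam_j j) (Lam_j j) \<and>
     (\<forall>x\<in>Lam_j j. \<forall>y\<in>Lam_j j. g (\<lambda>i. x i + y i) = (\<lambda>i. g x i + g y i)) \<and>
     (\<forall>x\<in>Lam_j j. \<forall>y\<in>Lam_j j. herm (g x) (g y) = herm x y)"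

definition E_isometry :: "((nat \<Rightarrow> complex) \<Rightarrow> (nat \<Rightarrow> complex)) \<Rightarrow> bool" where
  "E_isometry G \<longleftrightarrow>
     bij_betw G Lam Lam \<and>
     (\<forall>x\<in>Lam. \<forall>y\<in>Lam. G (\<lambda>i. x i + y i) = (\<lambda>i. G x i + G y i)) \<and>
     (\<forall>a\<in>Eis. \<forall>x\<in>Lam. G (\<lambda>i. a * x i) = (\<lambda>i. a * G x i)) \<and>
     (\<forall>x\<in>Lam. \<forall>y\<in>Lam. herm (G x) (G y) = herm x y)"

end

theory Submission imports Defs begin

lemma omega_sq: "omega * omega = -1 - omega"
  by (simp add: omega_def complex_eq_iff field_simps)

lemma Eis_mult: assumes "x \<in> Eis" "y \<in> Eis" shows "x * y \<in> Eis"
proof -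
  obtain a b where x: "x = of_int a + of_int b * omega" using assms(1) by (auto simp: Eis_def)
  obtain c d where y: "y = of_int c + of_int d * omega" using assms(2) by (auto simp: Eis_def)
  have "x * y = of_int a * of_int c + (of_int a * of_int d + of_int b * of_int c) * omega + of_int b * of_int d * (omega*omega)"
    unfolding x y by (simp add: algebra_simps)
  also have "\<dots> = of_int (a*c - b*d) + of_int (a*d+b*c-b*d) * omega"
    by (simp add: omega_sq algebra_simps)
  finally show ?thesis unfolding Eis_def by blast
qed

lemma Eis_add: assumes "x \<in> Eis" "y \<in> Eis" shows "x + y \<in> Eis"
proof -
  obtain a b where x: "x = of_int a + of_int b * omega" using assms(1) by (auto simp: Eis_def)
  obtain c d where y: "y = of_int c + of_int d * omega" using assms(2) by (auto simp: Eis_def)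
  have "x + y = of_int (a+c) + of_int (b+d) * omega" unfolding x y by (simp add: algebra_simps)
  then show ?thesis unfolding Eis_def by blast
qed

lemma Eis_int: "of_int n \<in> Eis"
  unfolding Eis_def by (rule CollectI, rule exI[of _ n], rule exI[of _ 0]) simp

lemma Eis_0: "0 \<in> Eis" using Eis_int[of 0] by simp

definition th :: complex where "th = Complex 0 (sqrt 3)"

lemma th_eq: "th = 1 + 2 * omega"
  by (simp add: th_def omega_def complex_eq_iff)

lemma Eis_th: "th \<in> Eis"
  unfolding Eis_def th_eq by (rule CollectI, rule exI[of _ 1], rule exI[of _ 2]) simp

lemma th_sq: "th * th = -3"
  by (simp add: th_def complex_eq_iff)

lemma cnj_th: "cnj th = - th"
  by (simp add: th_def complex_eq_iff)

lemma th_nz: "th \<noteq> 0" by (simp add: th_def complex_eq_iff)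

lemma Eis_sum: "finite I \<Longrightarrow> (\<And>i. i \<in> I \<Longrightarrow> f i \<in> Eis) \<Longrightarrow> sum f I \<in> Eis"
  by (induction I rule: finite_induct) (auto intro: Eis_add Eis_0)

lemma Eis_Re_Im: "Re (of_int a + of_int b * omega) = a - b/2" "Im (of_int a + of_int b * omega) = b * sqrt 3 / 2"
  by (simp_all add: omega_def)

definition bet :: "nat \<Rightarrow> nat \<Rightarrow> complex" where "bet j i = (if i < 5 - j then 1 else th)"

lemma bet_nz: "bet j i \<noteq> 0" by (simp add: bet_def th_nz)

lemma Eis_bet: "bet j i \<in> Eis" by (simp add: bet_def Eis_th Eis_int[of 1, simplified])

lemma Lam_j_char: "x \<in> Lam_j j \<longleftrightarrow> (\<forall>k\<ge>5. x k = 0) \<and> (\<forall>k<5. \<exists>n::int. x k = of_int n * bet j k)"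
proof
  assume x: "x \<in> Lam_j j"
  hence L: "x \<in> Lam" and X: "xi j x = x" by (auto simp: Lam_j_def)
  show "(\<forall>k\<ge>5. x k = 0) \<and> (\<forall>k<5. \<exists>n::int. x k = of_int n * bet j k)"
  proof (intro conjI allI impI)
    fix k :: nat assume "5 \<le> k" thus "x k = 0" using L by (auto simp: Lam_def)
  next
    fix k :: nat assume k: "k < 5"
    then obtain a b where ab: "x k = of_int a + of_int b * omega" using L by (auto simp: Lam_def Eis_def)
    have xk: "xi j x k = x k" using X by simp
    show "\<exists>n::int. x k = of_int n * bet j k"
    proof (cases "k < 5 - j")
      case True
      hence "cnj (x k) = x k" using xk by (simp add: xi_def)
      hence "Im (cnj (x k)) = Im (x k)" by simp
      hence "Im (x k) = 0" by simp
      moreover have "Im (x k) = b * sqrt 3 / 2" by (simp only: ab Eis_Re_Im)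
      ultimately have "b = 0" by simp
      thus ?thesis using ab True by (auto simp: bet_def)
    next
      case False
      hence "- cnj (x k) = x k" using xk k by (simp add: xi_def)
      hence "Re (- cnj (x k)) = Re (x k)" by simp
      hence "Re (x k) = 0" by simp
      moreover have "Re (x k) = a - b/2" by (simp only: ab Eis_Re_Im)
      ultimately have "b = 2 * a" by linarith
      hence "x k = of_int a * th" using ab by (simp add: th_eq algebra_simps)
      thus ?thesis using False by (auto simp: bet_def)
    qed
  qed
next
  assume A: "(\<forall>k\<ge>5. x k = 0) \<and> (\<forall>k<5. \<exists>n::int. x k = of_int n * bet j k)"
  have "x \<in> Lam" unfolding Lam_def using A Eis_mult[OF Eis_int Eis_bet] by auto
  moreover have "xi j x = x"
  proof
    fix i show "xi j x i = x i"
    proof (cases "i < 5")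
      case True
      then obtain n where n: "x i = of_int n * bet j i" using A by auto
      show ?thesis using True n by (auto simp: xi_def bet_def cnj_th)
    next
      case False thus ?thesis using A by (simp add: xi_def)
    qed
  qed
  ultimately show "x \<in> Lam_j j" by (simp add: Lam_j_def)
qed


lemma Lj_add: "x \<in> Lam_j j \<Longrightarrow> y \<in> Lam_j j \<Longrightarrow> (\<lambda>k. x k + y k) \<in> Lam_j j"
proof -
  assume x: "x \<in> Lam_j j" and y: "y \<in> Lam_j j"
  show ?thesis unfolding Lam_j_char
  proof (intro conjI allI impI)
    fix k :: nat assume "5 \<le> k" thus "x k + y k = 0" using x y by (simp add: Lam_j_char)
  next
    fix k :: nat assume k: "k < 5"
    obtain n where n: "x k = of_int n * bet j k" using x k by (auto simp: Lam_j_char)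
    obtain m where m: "y k = of_int m * bet j k" using y k by (auto simp: Lam_j_char)
    have "x k + y k = of_int (n+m) * bet j k" by (simp add: n m algebra_simps)
    thus "\<exists>n::int. x k + y k = of_int n * bet j k" by blast
  qed
qed

lemma Lj_scale: "x \<in> Lam_j j \<Longrightarrow> (\<lambda>k. of_int c * x k) \<in> Lam_j j"
proof -
  assume x: "x \<in> Lam_j j"
  show ?thesis unfolding Lam_j_char
  proof (intro conjI allI impI)
    fix k :: nat assume "5 \<le> k" thus "of_int c * x k = 0" using x by (simp add: Lam_j_char)
  next
    fix k :: nat assume k: "k < 5"
    obtain n where n: "x k = of_int n * bet j k" using x k by (auto simp: Lam_j_char)
    have "of_int c * x k = of_int (c*n) * bet j k" by (simp add: n algebra_simps)
    thus "\<exists>n::int. of_int c * x k = of_int n * bet j k" by blast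
  qed
qed

lemma Lj_zero: "(\<lambda>k. 0) \<in> Lam_j j"
  unfolding Lam_j_char by (auto intro: exI[of _ 0])

lemma Lj_sum: "finite S \<Longrightarrow> (\<And>i. i \<in> S \<Longrightarrow> v i \<in> Lam_j j) \<Longrightarrow> (\<lambda>k. \<Sum>i\<in>S. of_int (n i) * v i k) \<in> Lam_j j"
proof (induction S rule: finite_induct)
  case empty then show ?case by (simp add: Lj_zero)
next
  case (insert a S)
  have "(\<lambda>k. \<Sum>i\<in>insert a S. of_int (n i) * v i k) = (\<lambda>k. of_int (n a) * v a k + (\<Sum>i\<in>S. of_int (n i) * v i k))"
    using insert by simp
  then show ?case using insert Lj_add Lj_scale by simp
qed

definition bv :: "nat \<Rightarrow> nat \<Rightarrow> nat \<Rightarrow> complex" where "bv j i = (\<lambda>k. if k = i then bet j i else 0)"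

lemma bv_Lj: "i < 5 \<Longrightarrow> bv j i \<in> Lam_j j"
  unfolding Lam_j_char bv_def by (auto intro: exI[of _ 1] exI[of _ 0])

lemma Lj_decomp: assumes "x \<in> Lam_j j"
  obtains n where "x = (\<lambda>k. \<Sum>i<5. of_int (n i) * bv j i k)" "\<And>i. i < 5 \<Longrightarrow> x i = of_int (n i) * bet j i"
proof -
  have "\<forall>k. \<exists>n::int. k < 5 \<longrightarrow> x k = of_int n * bet j k" using assms by (auto simp: Lam_j_char)
  then obtain n where n: "\<And>k. k < 5 \<Longrightarrow> x k = of_int (n k) * bet j k" by metis
  have "x = (\<lambda>k. \<Sum>i<5. of_int (n i) * bv j i k)"
  proof
    fix k
    have "(\<Sum>i<5. of_int (n i) * bv j i k) = (\<Sum>i<5. if k = i then of_int (n i) * bet j i else 0)"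
      by (rule sum.cong) (auto simp: bv_def)
    also have "\<dots> = (if k < 5 then of_int (n k) * bet j k else 0)" by simp
    also have "\<dots> = x k" using n assms by (auto simp: Lam_j_char)
    finally show "x k = (\<Sum>i<5. of_int (n i) * bv j i k)" by simp
  qed
  thus ?thesis using that n by blast
qed

lemma herm_expand: "herm x y = - x 0 * cnj (y 0) + x 1 * cnj (y 1) + x 2 * cnj (y 2) + x 3 * cnj (y 3) + x 4 * cnj (y 4)"
proof -
  have "{1..4::nat} = {1,2,3,4}" by auto
  thus ?thesis by (simp add: herm_def algebra_simps)
qed

lemma herm_sum_left: "herm (\<lambda>k. \<Sum>i\<in>I. a i * u i k) y = (\<Sum>i\<in>I. a i * herm (u i) y)"
  by (simp add: herm_expand sum_distrib_right sum_distrib_left distrib_left sum.distrib sum_negf mult.assoc right_diff_distrib sum_subtractf)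

lemma herm_sum_right: "herm x (\<lambda>k. \<Sum>i\<in>I. a i * u i k) = (\<Sum>i\<in>I. cnj (a i) * herm x (u i))"
  by (simp add: herm_expand sum_distrib_right sum_distrib_left distrib_left sum.distrib sum_negf mult.assoc mult.left_commute right_diff_distrib sum_subtractf)

lemma herm_cong: "(\<And>k. k < 5 \<Longrightarrow> x k = x' k) \<Longrightarrow> (\<And>k. k < 5 \<Longrightarrow> y k = y' k) \<Longrightarrow> herm x y = herm x' y'"
  unfolding herm_expand by simp

lemma five_cases: "(k::nat) < 5 \<Longrightarrow> k = 0 \<or> k = 1 \<or> k = 2 \<or> k = 3 \<or> k = 4" by auto

lemma herm_single_right: "k < 5 \<Longrightarrow> herm v (\<lambda>m. if m = k then c else 0) = (if k = 0 then -1 else 1) * v k * cnj c"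
  unfolding herm_expand by (drule five_cases) auto

lemma herm_single_left: "k < 5 \<Longrightarrow> herm (\<lambda>m. if m = k then c else 0) v = (if k = 0 then -1 else 1) * c * cnj (v k)"
  unfolding herm_expand by (drule five_cases) auto

definition GG :: "nat \<Rightarrow> ((nat \<Rightarrow> complex) \<Rightarrow> (nat \<Rightarrow> complex)) \<Rightarrow> (nat \<Rightarrow> complex) \<Rightarrow> (nat \<Rightarrow> complex)" where
  "GG j g x = (\<lambda>k. \<Sum>i<5. x i / bet j i * g (bv j i) k)"

lemma GG_lin: "GG j g (\<lambda>k. \<Sum>i\<in>I. a i * v i k) = (\<lambda>k. \<Sum>i\<in>I. a i * GG j g (v i) k)"
proof
  fix k
  have "GG j g (\<lambda>k. \<Sum>i\<in>I. a i * v i k) k = (\<Sum>l<5. \<Sum>i\<in>I. a i * (v i l / bet j l * g (bv j l) k))"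
    unfolding GG_def by (simp add: sum_divide_distrib sum_distrib_right mult.assoc)
  also have "\<dots> = (\<Sum>i\<in>I. \<Sum>l<5. a i * (v i l / bet j l * g (bv j l) k))"
    by (rule sum.swap)
  also have "\<dots> = (\<Sum>i\<in>I. a i * GG j g (v i) k)"
    unfolding GG_def by (simp add: sum_distrib_left)
  finally show "GG j g (\<lambda>k. \<Sum>i\<in>I. a i * v i k) k = (\<Sum>i\<in>I. a i * GG j g (v i) k)" .
qed

lemma GG_add: "GG j g (\<lambda>i. x i + y i) = (\<lambda>k. GG j g x k + GG j g y k)"
  by (simp add: GG_def add_divide_distrib distrib_right sum.distrib)

lemma GG_smult: "GG j g (\<lambda>i. a * x i) = (\<lambda>k. a * GG j g x k)"
  by (simp add: GG_def sum_distrib_left mult.assoc)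

context fixes j g assumes iso: "lattice_isometry_j j g" begin

lemma g_add: "x \<in> Lam_j j \<Longrightarrow> y \<in> Lam_j j \<Longrightarrow> g (\<lambda>i. x i + y i) = (\<lambda>i. g x i + g y i)"
  using iso by (simp add: lattice_isometry_j_def)

lemma g_mem: "x \<in> Lam_j j \<Longrightarrow> g x \<in> Lam_j j"
  using iso by (auto simp: lattice_isometry_j_def bij_betw_def)

lemma g_herm: "x \<in> Lam_j j \<Longrightarrow> y \<in> Lam_j j \<Longrightarrow> herm (g x) (g y) = herm x y"
  using iso by (simp add: lattice_isometry_j_def)

lemma g_zero: "g (\<lambda>k. 0) = (\<lambda>k. 0)"
proof -
  have e: "g (\<lambda>k. 0) = (\<lambda>k. g (\<lambda>k. 0) k + g (\<lambda>k. 0) k)"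
    using g_add[OF Lj_zero Lj_zero] by simp
  show ?thesis
  proof
    fix k
    have "g (\<lambda>k. 0) k = g (\<lambda>k. 0) k + g (\<lambda>k. 0) k" using fun_cong[OF e, of k] by simp
    thus "g (\<lambda>k. 0) k = 0" by simp
  qed
qed

lemma g_nat: "x \<in> Lam_j j \<Longrightarrow> g (\<lambda>k. of_nat n * x k) = (\<lambda>k. of_nat n * g x k)"
proof (induction n)
  case 0 then show ?case using g_zero by simp
next
  case (Suc n)
  have m: "(\<lambda>k. of_nat n * x k) \<in> Lam_j j" using Lj_scale[OF Suc.prems, of "int n"] by simp
  have "(\<lambda>k. of_nat (Suc n) * x k) = (\<lambda>k. of_nat n * x k + x k)" by (simp add: algebra_simps)
  hence "g (\<lambda>k. of_nat (Suc n) * x k) = (\<lambda>k. g (\<lambda>k. of_nat n * x k) k + g x k)"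
    using g_add[OF m Suc.prems] by simp
  then show ?case using Suc by (simp add: algebra_simps)
qed

lemma g_neg: "x \<in> Lam_j j \<Longrightarrow> g (\<lambda>k. - x k) = (\<lambda>k. - g x k)"
proof -
  assume x: "x \<in> Lam_j j"
  have m: "(\<lambda>k. - x k) \<in> Lam_j j" using Lj_scale[OF x, of "-1"] by simp
  have e: "g (\<lambda>k. x k + - x k) = (\<lambda>k. g x k + g (\<lambda>k. - x k) k)" using g_add[OF x m] .
  have e2: "(\<lambda>k. x k + - x k) = (\<lambda>k. 0)" by simp
  show ?thesis
  proof
    fix k
    have "0 = g x k + g (\<lambda>k. - x k) k" using fun_cong[OF e, of k] unfolding e2 g_zero by simp
    thus "g (\<lambda>k. - x k) k = - g x k" by (simp add: eq_neg_iff_add_eq_0 add.commute)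
  qed
qed

lemma g_int: "x \<in> Lam_j j \<Longrightarrow> g (\<lambda>k. of_int c * x k) = (\<lambda>k. of_int c * g x k)"
proof (cases "c \<ge> 0")
  case True
  assume x: "x \<in> Lam_j j"
  then show ?thesis using g_nat[OF x, of "nat c"] True by simp
next
  case False
  assume x: "x \<in> Lam_j j"
  have m: "(\<lambda>k. of_nat (nat (-c)) * x k) \<in> Lam_j j" using Lj_scale[OF x, of "-c"] False by simp
  have "(\<lambda>k. of_int c * x k) = (\<lambda>k. - (of_nat (nat (-c)) * x k))" using False by simp
  hence "g (\<lambda>k. of_int c * x k) = (\<lambda>k. - g (\<lambda>k. of_nat (nat (-c)) * x k) k)"
    using g_neg[OF m] by simp
  then show ?thesis using g_nat[OF x, of "nat (-c)"] False by simp
qed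

lemma g_sum: "finite S \<Longrightarrow> (\<And>i. i \<in> S \<Longrightarrow> v i \<in> Lam_j j) \<Longrightarrow>
   g (\<lambda>k. \<Sum>i\<in>S. of_int (n i) * v i k) = (\<lambda>k. \<Sum>i\<in>S. of_int (n i) * g (v i) k)"
proof (induction S rule: finite_induct)
  case empty then show ?case using g_zero by simp
next
  case (insert a S)
  have e: "(\<lambda>k. \<Sum>i\<in>insert a S. of_int (n i) * v i k) = (\<lambda>k. of_int (n a) * v a k + (\<Sum>i\<in>S. of_int (n i) * v i k))"
    using insert by simp
  have va: "v a \<in> Lam_j j" using insert by simp
  have m1: "(\<lambda>k. of_int (n a) * v a k) \<in> Lam_j j" using Lj_scale[OF va] .
  have m2: "(\<lambda>k. \<Sum>i\<in>S. of_int (n i) * v i k) \<in> Lam_j j" using insert by (intro Lj_sum) auto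
  have IH: "g (\<lambda>k. \<Sum>i\<in>S. of_int (n i) * v i k) = (\<lambda>k. \<Sum>i\<in>S. of_int (n i) * g (v i) k)"
    using insert by simp
  have "g (\<lambda>k. \<Sum>i\<in>insert a S. of_int (n i) * v i k) = (\<lambda>k. g (\<lambda>k. of_int (n a) * v a k) k + g (\<lambda>k. \<Sum>i\<in>S. of_int (n i) * v i k) k)"
    unfolding e by (rule g_add[OF m1 m2])
  also have "\<dots> = (\<lambda>k. of_int (n a) * g (v a) k + (\<Sum>i\<in>S. of_int (n i) * g (v i) k))"
    unfolding IH g_int[OF va] ..
  also have "\<dots> = (\<lambda>k. \<Sum>i\<in>insert a S. of_int (n i) * g (v i) k)"
    using insert by simp
  finally show ?case .
qed

lemma GG_ext: "x \<in> Lam_j j \<Longrightarrow> GG j g x = g x"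
proof -
  assume x: "x \<in> Lam_j j"
  obtain n where n1: "x = (\<lambda>k. \<Sum>i<5. of_int (n i) * bv j i k)" and n2: "\<And>i. i < 5 \<Longrightarrow> x i = of_int (n i) * bet j i"
    using Lj_decomp[OF x] by blast
  have "g x = (\<lambda>k. \<Sum>i<5. of_int (n i) * g (bv j i) k)"
    by (subst n1, rule g_sum) (auto intro: bv_Lj)
  moreover have "GG j g x = (\<lambda>k. \<Sum>i<5. of_int (n i) * g (bv j i) k)"
    unfolding GG_def by (intro ext sum.cong) (auto simp: n2 bet_nz)
  ultimately show ?thesis by (simp only:)
qed

lemma GG_herm: "herm (GG j g x) (GG j g y) = herm x y"
proof -
  define a where "a i = x i / bet j i" for i
  define b where "b i = y i / bet j i" for i
  have hb: "herm (g (bv j i)) (g (bv j l)) = herm (bv j i) (bv j l)" if "i < 5" "l < 5" for i l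
    using g_herm bv_Lj that by simp
  have "herm (GG j g x) (GG j g y) = (\<Sum>i<5. a i * (\<Sum>l<5. cnj (b l) * herm (g (bv j i)) (g (bv j l))))"
    unfolding GG_def a_def[symmetric] b_def[symmetric] herm_sum_left herm_sum_right ..
  also have "\<dots> = (\<Sum>i<5. a i * (\<Sum>l<5. cnj (b l) * herm (bv j i) (bv j l)))"
    by (auto intro!: sum.cong simp: hb)
  also have "\<dots> = herm (\<lambda>k. \<Sum>i<5. a i * bv j i k) (\<lambda>k. \<Sum>l<5. b l * bv j l k)"
    unfolding herm_sum_left herm_sum_right ..
  also have "\<dots> = herm x y"
  proof (rule herm_cong)
    fix k :: nat assume k: "k < 5"
    have "(\<Sum>i<5. a i * bv j i k) = (\<Sum>i<5. if k = i then a i * bet j i else 0)"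
      by (rule sum.cong) (auto simp: bv_def)
    thus "(\<Sum>i<5. a i * bv j i k) = x k" using k by (simp add: a_def bet_nz)
    have "(\<Sum>i<5. b i * bv j i k) = (\<Sum>i<5. if k = i then b i * bet j i else 0)"
      by (rule sum.cong) (auto simp: bv_def)
    thus "(\<Sum>i<5. b i * bv j i k) = y k" using k by (simp add: b_def bet_nz)
  qed
  finally show ?thesis .
qed


lemma g_surj: "z \<in> Lam_j j \<Longrightarrow> \<exists>w\<in>Lam_j j. g w = z"
  using iso unfolding lattice_isometry_j_def bij_betw_def by (metis imageE)

lemma key: assumes i: "i < 5" and k: "k < 5" shows "g (bv j i) k / bet j i \<in> Eis"
proof -
  define c where "c = g (bv j i)"
  have c: "c \<in> Lam_j j" unfolding c_def using g_mem bv_Lj i by simp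
  obtain m where m: "c k = of_int m * bet j k" using c k by (auto simp: Lam_j_char)
  show ?thesis
  proof (cases "i < 5 - j")
    case True
    then show ?thesis using m Eis_mult[OF Eis_int Eis_bet] by (simp add: c_def[symmetric] bet_def)
  next
    case iF: False
    hence bi: "bet j i = th" by (simp add: bet_def)
    show ?thesis
    proof (cases "k < 5 - j")
      case False
      hence "c k / bet j i = of_int m" using m bi th_nz by (simp add: bet_def)
      thus ?thesis using Eis_int by (simp add: c_def)
    next
      case True
      hence bk: "bet j k = 1" by (simp add: bet_def)
      obtain w where w: "w \<in> Lam_j j" "g w = bv j k" using g_surj bv_Lj k by blast
      obtain n where n: "w i = of_int n * bet j i" using w i by (auto simp: Lam_j_char)
      have "herm c (bv j k) = herm (bv j i) w" unfolding c_def using g_herm[OF bv_Lj[OF i] w(1)] w(2) by simp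
      moreover have "herm c (bv j k) = (if k = 0 then -1 else 1) * of_int m"
        unfolding bv_def using herm_single_right[OF k] by (simp add: m bk)
      moreover have "herm (bv j i) w = (if i = 0 then -1 else 1) * (3 * of_int n)"
        unfolding bv_def using herm_single_left[OF i] by (simp add: n bi cnj_th th_sq mult.assoc mult.left_commute[of th])
      ultimately have E: "(if k = 0 then -1 else 1) * (of_int m :: complex) = (if i = 0 then -1 else 1) * (3 * of_int n)"
        by simp
      define e :: "nat \<Rightarrow> int" where "e l = (if l = 0 then -1 else 1)" for l
      have "of_int (e k * m) = (of_int (e i * 3 * n) :: complex)" using E
        by (cases "k = 0"; cases "i = 0") (simp_all add: e_def)
      hence "e k * m = e i * 3 * n" by (simp only: of_int_eq_iff)
      hence "3 dvd e k * m" by (metis dvd_triv_left mult.commute mult.left_commute)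
      hence "3 dvd m" by (cases "k = 0") (simp_all add: e_def)
      then obtain q where q: "m = 3 * q" by (elim dvdE)
      have "c k / bet j i = of_int (- q) * th"
        using m bk bi th_nz q by (simp add: field_simps th_sq) (simp add: mult.assoc[symmetric] th_sq)
      thus ?thesis using Eis_mult[OF Eis_int Eis_th, of "- q"] unfolding c_def by metis
    qed
  qed
qed

lemma GG_Lam: "x \<in> Lam \<Longrightarrow> GG j g x \<in> Lam"
proof -
  assume x: "x \<in> Lam"
  have z: "g (bv j i) k = 0" if "i < 5" "5 \<le> k" for i k
    using g_mem[OF bv_Lj[OF that(1)]] that(2) by (simp add: Lam_j_char)
  show ?thesis unfolding Lam_def
  proof (intro CollectI conjI allI impI)
    fix k :: nat assume k: "k < 5"
    have "GG j g x k = (\<Sum>i<5. x i * (g (bv j i) k / bet j i))" unfolding GG_def by simp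
    also have "\<dots> \<in> Eis" using x k by (intro Eis_sum Eis_mult) (auto simp: Lam_def intro!: key)
    finally show "GG j g x k \<in> Eis" .
  next
    fix k :: nat assume "5 \<le> k" thus "GG j g x k = 0" unfolding GG_def using z by simp
  qed
qed

end


lemma inv_iso:
  assumes iso: "lattice_isometry_j j g"
  shows "lattice_isometry_j j (inv_into (Lam_j j) g)"
proof -
  have bij: "bij_betw g (Lam_j j) (Lam_j j)" and inj: "inj_on g (Lam_j j)" and im: "g ` Lam_j j = Lam_j j"
    using iso by (auto simp: lattice_isometry_j_def bij_betw_def)
  let ?h = "inv_into (Lam_j j) g"
  have hin: "?h x \<in> Lam_j j" if "x \<in> Lam_j j" for x using inv_into_into[of x g "Lam_j j"] that im by simp
  have ghx: "g (?h x) = x" if "x \<in> Lam_j j" for x using f_inv_into_f[of x g "Lam_j j"] that im by simp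
  have add: "?h (\<lambda>i. x i + y i) = (\<lambda>i. ?h x i + ?h y i)" if x: "x \<in> Lam_j j" and y: "y \<in> Lam_j j" for x y
  proof -
    have s: "(\<lambda>i. ?h x i + ?h y i) \<in> Lam_j j" using Lj_add hin x y by blast
    have "g (\<lambda>i. ?h x i + ?h y i) = (\<lambda>i. g (?h x) i + g (?h y) i)" using g_add[OF iso hin[OF x] hin[OF y]] .
    also have "\<dots> = (\<lambda>i. x i + y i)" using ghx x y by simp
    finally have "?h (g (\<lambda>i. ?h x i + ?h y i)) = ?h (\<lambda>i. x i + y i)" by simp
    thus ?thesis using inv_into_f_f[OF inj s] by simp
  qed
  have hh: "herm (?h x) (?h y) = herm x y" if x: "x \<in> Lam_j j" and y: "y \<in> Lam_j j" for x y
    using g_herm[OF iso hin[OF x] hin[OF y]] ghx x y by simp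
  show ?thesis unfolding lattice_isometry_j_def using bij_betw_inv_into[OF bij] add hh by blast
qed

lemma GG_comp:
  assumes g: "lattice_isometry_j j g" and h: "lattice_isometry_j j h"
    and hg: "\<And>x. x \<in> Lam_j j \<Longrightarrow> h (g x) = x" and x: "x \<in> Lam"
  shows "GG j h (GG j g x) = x"
proof -
  define a where "a i = x i / bet j i" for i
  have "GG j g x = (\<lambda>k. \<Sum>i<5. a i * g (bv j i) k)" unfolding GG_def a_def ..
  hence "GG j h (GG j g x) = (\<lambda>k. \<Sum>i<5. a i * GG j h (g (bv j i)) k)" by (simp add: GG_lin)
  also have "\<dots> = (\<lambda>k. \<Sum>i<5. a i * bv j i k)"
  proof (intro ext sum.cong refl)
    fix k i assume "i \<in> {..<5::nat}"
    hence i: "i < 5" by simp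
    have "GG j h (g (bv j i)) = h (g (bv j i))" using GG_ext[OF h g_mem[OF g bv_Lj[OF i]]] .
    also have "\<dots> = bv j i" using hg bv_Lj[OF i] by simp
    finally show "a i * GG j h (g (bv j i)) k = a i * bv j i k" by simp
  qed
  also have "\<dots> = x"
  proof
    fix k
    have "(\<Sum>i<5. a i * bv j i k) = (\<Sum>i<5. if k = i then a i * bet j i else 0)"
      by (rule sum.cong) (auto simp: bv_def)
    also have "\<dots> = x k" using x by (auto simp: a_def bet_nz Lam_def)
    finally show "(\<Sum>i<5. a i * bv j i k) = x k" .
  qed
  finally show ?thesis .
qed

theorem lemma5p2:
  fixes j :: nat and g :: "(nat \<Rightarrow> complex) \<Rightarrow> (nat \<Rightarrow> complex)"
  assumes "j \<le> 4"
    and "lattice_isometry_j j g"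
  shows "\<exists>G. E_isometry G \<and> (\<forall>x\<in>Lam_j j. G x = g x)"
proof -
  note iso = assms(2)
  let ?h = "inv_into (Lam_j j) g"
  have h: "lattice_isometry_j j ?h" using inv_iso[OF iso] .
  have inj: "inj_on g (Lam_j j)" and im: "g ` Lam_j j = Lam_j j"
    using iso by (auto simp: lattice_isometry_j_def bij_betw_def)
  have hg: "?h (g x) = x" if "x \<in> Lam_j j" for x using inv_into_f_f[OF inj that] .
  have gh: "g (?h x) = x" if "x \<in> Lam_j j" for x using f_inv_into_f[of x g "Lam_j j"] that im by simp
  have bij: "bij_betw (GG j g) Lam Lam"
  proof (rule bij_betw_byWitness[where f' = "GG j ?h"])
    show "\<forall>a\<in>Lam. GG j ?h (GG j g a) = a" using GG_comp[OF iso h hg] by blast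
    show "\<forall>a\<in>Lam. GG j g (GG j ?h a) = a" using GG_comp[OF h iso gh] by blast
    show "GG j g ` Lam \<subseteq> Lam" using GG_Lam[OF iso] by blast
    show "GG j ?h ` Lam \<subseteq> Lam" using GG_Lam[OF h] by blast
  qed
  have "E_isometry (GG j g)"
    unfolding E_isometry_def using bij GG_add GG_smult GG_herm[OF iso] by blast
  moreover have "\<forall>x\<in>Lam_j j. GG j g x = g x" using GG_ext[OF iso] by blast
  ultimately show ?thesis by blast
qed

end
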